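(* Let $\mathcal{X}$ be a recursively presented metric space. For every $x\in\mathcal{X}$ there is a name $p\in\omega^\omega$ of $x$ such that $x'\equiv_T p'$, where $p'$ is the Turing jump of $p$.
   Context: A recursively presented metric space is a Polish space with compatible complete metric $d$ and a dense sequence $(a_i)$ such that $d(a_i,a_j)<q_r$ and $d(a_i,a_j)\leq q_r$ are recursive relations, $(q_r)$ a fixed recursive enumeration of positive rationals; basic balls $B_{i,r}=\{x:d(x,a_i)<q_r\}$ are coded by $\langle i,r\rangle$. $\mathrm{Nbase}(x)=\{\langle i,r\rangle:x\in B_{i,r}\}$; a name of $x$ is any $p\in\omega^\omega$ whose range is exactly $\mathrm{Nbase}(x)$. The jump of $x$ is $x'=\{e\in\omega:x\in\bigcup_{\langle i,r\rangle\in W_e}B_{i,r}\}$, $W_e$ the $e$-th c.e. subset of $\omega$. *)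

theory Defs
  imports "HOL-Analysis.Analysis" "HOL-Library.Nat_Bijection"
begin

text \<open>Constructors: 0 zero, 1 successor, 2/3 the two projections of the
pairing, 4 pairing of two programs, 5 composition, 6 oracle query,
7 primitive recursion, 8 unbounded minimisation.
comp orc c x y means: program c with oracle orc on input x halts with output y.\<close>

inductive comp :: "(nat \<Rightarrow> nat) \<Rightarrow> nat \<Rightarrow> nat \<Rightarrow> nat \<Rightarrow> bool" for orc where
  c_zero: "c mod 9 = 0 \<Longrightarrow> comp orc c x 0"
| c_succ: "c mod 9 = 1 \<Longrightarrow> comp orc c x (Suc x)"
| c_fst: "c mod 9 = 2 \<Longrightarrow> comp orc c x (fst (prod_decode x))"
| c_snd: "c mod 9 = 3 \<Longrightarrow> comp orc c x (snd (prod_decode x))"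
| c_pair: "c mod 9 = 4 \<Longrightarrow> prod_decode (c div 9) = (f, g) \<Longrightarrow>
     comp orc f x y \<Longrightarrow> comp orc g x z \<Longrightarrow> comp orc c x (prod_encode (y, z))"
| c_comp: "c mod 9 = 5 \<Longrightarrow> prod_decode (c div 9) = (f, g) \<Longrightarrow>
     comp orc g x y \<Longrightarrow> comp orc f y z \<Longrightarrow> comp orc c x z"
| c_oracle: "c mod 9 = 6 \<Longrightarrow> comp orc c x (orc x)"
| c_rec0: "c mod 9 = 7 \<Longrightarrow> prod_decode (c div 9) = (f, g) \<Longrightarrow>
     prod_decode x = (u, 0) \<Longrightarrow> comp orc f u y \<Longrightarrow> comp orc c x y"
| c_recS: "c mod 9 = 7 \<Longrightarrow> prod_decode (c div 9) = (f, g) \<Longrightarrow>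
     prod_decode x = (u, Suc n) \<Longrightarrow> comp orc c (prod_encode (u, n)) z \<Longrightarrow>
     comp orc g (prod_encode (u, prod_encode (n, z))) y \<Longrightarrow> comp orc c x y"
| c_mu: "c mod 9 = 8 \<Longrightarrow> comp orc (c div 9) (prod_encode (x, y)) 0 \<Longrightarrow>
     (\<forall>z<y. \<exists>w. 0 < w \<and> comp orc (c div 9) (prod_encode (x, z)) w) \<Longrightarrow>
     comp orc c x y"

definition chi :: "nat set \<Rightarrow> nat \<Rightarrow> nat" where
  "chi A n = (if n \<in> A then 1 else 0)"

text \<open>Unrelativised computation = computation with the (computable) zero oracle.\<close>
definition recursive_set :: "nat set \<Rightarrow> bool" where
  "recursive_set A \<longleftrightarrow> (\<exists>c. \<forall>n. comp (\<lambda>_. 0) c n (chi A n))"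

definition W :: "nat \<Rightarrow> nat set" where
  "W e = {n. \<exists>y. comp (\<lambda>_. 0) e n y}"

definition turing_le :: "nat set \<Rightarrow> nat set \<Rightarrow> bool" where
  "turing_le A B \<longleftrightarrow> (\<exists>c. \<forall>n. comp (chi B) c n (chi A n))"

definition turing_equiv :: "nat set \<Rightarrow> nat set \<Rightarrow> bool" where
  "turing_equiv A B \<longleftrightarrow> turing_le A B \<and> turing_le B A"

definition fjump :: "(nat \<Rightarrow> nat) \<Rightarrow> nat set" where
  "fjump p = {e. \<exists>y. comp p e e y}"

definition q :: "nat \<Rightarrow> real" where
  "q r = real (fst (prod_decode r) + 1) / real (snd (prod_decode r) + 1)"

definition rec_presented :: "(nat \<Rightarrow> 'a::metric_space) \<Rightarrow> bool" where
  "rec_presented a \<longleftrightarrow> closure (range a) = UNIV \<and>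
     recursive_set {prod_encode (i, prod_encode (j, r)) | i j r. dist (a i) (a j) < q r} \<and>
     recursive_set {prod_encode (i, prod_encode (j, r)) | i j r. dist (a i) (a j) \<le> q r}"

definition ball_code :: "(nat \<Rightarrow> 'a::metric_space) \<Rightarrow> nat \<Rightarrow> 'a set" where
  "ball_code a k = ball (a (fst (prod_decode k))) (q (snd (prod_decode k)))"

definition Nbase :: "(nat \<Rightarrow> 'a::metric_space) \<Rightarrow> 'a \<Rightarrow> nat set" where
  "Nbase a x = {k. x \<in> ball_code a k}"

definition is_name :: "(nat \<Rightarrow> 'a::metric_space) \<Rightarrow> (nat \<Rightarrow> nat) \<Rightarrow> 'a \<Rightarrow> bool" where
  "is_name a p x \<longleftrightarrow> range p = Nbase a x"

definition pjump :: "(nat \<Rightarrow> 'a::metric_space) \<Rightarrow> 'a \<Rightarrow> nat set" where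
  "pjump a x = {e. x \<in> (\<Union>k\<in>W e. ball_code a k)}"

end

theory Submission
  imports Defs
begin

abbreviation "enc \<equiv> prod_encode"
abbreviation "dec \<equiv> prod_decode"

lemma comp_det: "comp orc c x y \<Longrightarrow> comp orc c x y' \<Longrightarrow> y' = y"
proof (induction arbitrary: y' rule: comp.induct)
  case (c_mu c x y)
  note h = c_mu
  from c_mu.prems show ?case
  proof (cases rule: comp.cases)
    case (c_mu)
    show ?thesis
    proof (rule ccontr)
      assume "y' \<noteq> y"
      then consider "y' < y" | "y < y'" by linarith
      then show False
      proof cases
        case 1
        with h(4) obtain w where "0 < w" "\<forall>v. comp orc (c div 9) (prod_encode (x, y')) v \<longrightarrow> v = w" by blast
        with c_mu(2) show False by force
      next
        case 2
        with c_mu(3) obtain w where "0 < w" "comp orc (c div 9) (prod_encode (x, y)) w" by blast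
        with h(3) show False by force
      qed
    qed
  qed (use h(1) in auto)
next
  case (c_pair c f g x y z)
  from c_pair.prems c_pair.hyps show ?case by (cases rule: comp.cases) (auto dest: c_pair.IH)
next
  case (c_comp c f g x y z)
  from c_comp.prems c_comp.hyps show ?case by (cases rule: comp.cases) (auto dest: c_comp.IH)
next
  case (c_rec0 c f g x u y)
  from c_rec0.prems c_rec0.hyps show ?case by (cases rule: comp.cases) (auto dest: c_rec0.IH)
next
  case (c_recS c f g x u n z y)
  from c_recS.prems c_recS.hyps show ?case by (cases rule: comp.cases) (auto dest: c_recS.IH)
qed (erule comp.cases; simp)+


definition total :: "(nat \<Rightarrow> nat) \<Rightarrow> nat \<Rightarrow> (nat \<Rightarrow> nat) \<Rightarrow> bool" where
  "total orc c F \<longleftrightarrow> (\<forall>x. comp orc c x (F x))"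

definition "czero = (0::nat)"
definition "csucc = (1::nat)"
definition "cfst = (2::nat)"
definition "csnd = (3::nat)"
definition "corc = (6::nat)"
definition "cpair f g = 4 + 9 * enc (f, g)"
definition "ccomp f g = 5 + 9 * enc (f, g)"
definition "crec f g = 7 + 9 * enc (f, g)"
definition "cmu (f::nat) = 8 + 9 * f"

lemma total_ext: "total orc c F \<Longrightarrow> (\<And>x. F x = G x) \<Longrightarrow> total orc c G"
  by (simp add: total_def)

lemma total_czero[intro]: "total orc czero (\<lambda>x. 0)"
  unfolding total_def czero_def by (simp add: comp.c_zero)
lemma total_csucc[intro]: "total orc csucc Suc"
  unfolding total_def csucc_def by (simp add: comp.c_succ)
lemma total_cfst[intro]: "total orc cfst (\<lambda>x. fst (dec x))"
  unfolding total_def cfst_def by (simp add: comp.c_fst)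
lemma total_csnd[intro]: "total orc csnd (\<lambda>x. snd (dec x))"
  unfolding total_def csnd_def by (simp add: comp.c_snd)
lemma total_corc[intro]: "total orc corc orc"
  unfolding total_def corc_def by (simp add: comp.c_oracle)
lemma code_simps[simp]:
  "cpair f g mod 9 = 4" "cpair f g div 9 = enc (f, g)"
  "ccomp f g mod 9 = 5" "ccomp f g div 9 = enc (f, g)"
  "crec f g mod 9 = 7" "crec f g div 9 = enc (f, g)"
  "cmu h mod 9 = 8" "cmu h div 9 = h"
  by (simp_all add: cpair_def ccomp_def crec_def cmu_def)

lemma total_cpair[intro]:
  assumes "total orc f F" "total orc g G" shows "total orc (cpair f g) (\<lambda>x. enc (F x, G x))"
  unfolding total_def
proof
  fix x show "comp orc (cpair f g) x (enc (F x, G x))"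
    by (rule comp.c_pair[where f=f and g=g]) (use assms in \<open>simp_all add: total_def\<close>)
qed

lemma total_ccomp[intro]:
  assumes "total orc f F" "total orc g G" shows "total orc (ccomp f g) (\<lambda>x. F (G x))"
  unfolding total_def
proof
  fix x show "comp orc (ccomp f g) x (F (G x))"
    by (rule comp.c_comp[where f=f and g=g and y="G x"]) (use assms in \<open>simp_all add: total_def\<close>)
qed

fun prec :: "(nat \<Rightarrow> nat) \<Rightarrow> (nat \<Rightarrow> nat) \<Rightarrow> nat \<Rightarrow> nat \<Rightarrow> nat" where
  "prec F G u 0 = F u"
| "prec F G u (Suc n) = G (enc (u, enc (n, prec F G u n)))"

lemma total_crec[intro]:
  assumes "total orc f F" "total orc g G"
  shows "total orc (crec f g) (\<lambda>x. prec F G (fst (dec x)) (snd (dec x)))"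
  unfolding total_def
proof
  fix x
  obtain u n where x: "dec x = (u, n)" by (cases "dec x")
  have "comp orc (crec f g) (enc (u, n)) (prec F G u n)"
  proof (induction n)
    case 0 show ?case
      by (rule comp.c_rec0[where f=f and g=g and u=u]) (use assms in \<open>simp_all add: total_def\<close>)
  next
    case (Suc n) show ?case
      by (rule comp.c_recS[where f=f and g=g and u=u and n=n]) (use assms Suc in \<open>auto simp: total_def\<close>)
  qed
  then show "comp orc (crec f g) x (prec F G (fst (dec x)) (snd (dec x)))"
    using x by (metis fst_conv prod_decode_inverse snd_conv)
qed

lemma cmu_halt:
  assumes "total orc f F" "\<exists>y. F (enc (x, y)) = 0"
  shows "comp orc (cmu f) x (LEAST y. F (enc (x, y)) = 0)"
proof -
  let ?y = "LEAST y. F (enc (x, y)) = 0"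
  have 1: "F (enc (x, ?y)) = 0" using assms(2) by (rule LeastI_ex)
  have 2: "\<forall>z<?y. F (enc (x, z)) \<noteq> 0" using not_less_Least by blast
  show ?thesis
  proof (rule comp.c_mu)
    show "comp orc (cmu f div 9) (enc (x, ?y)) 0" using assms(1) 1 by (metis code_simps(8) total_def)
    show "\<forall>z<?y. \<exists>w>0. comp orc (cmu f div 9) (enc (x, z)) w"
      using assms(1) 2 unfolding total_def by auto
  qed simp
qed

lemma cmu_inv:
  assumes "total orc f F" "comp orc (cmu f) x y"
  shows "F (enc (x, y)) = 0"
  using assms(2)
proof (cases rule: comp.cases)
  case c_mu
  then show ?thesis using assms(1) comp_det unfolding total_def by fastforce
qed auto

lemma total_cmu:
  assumes "total orc f F" "\<And>x. \<exists>y. F (enc (x, y)) = 0"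
  shows "total orc (cmu f) (\<lambda>x. LEAST y. F (enc (x, y)) = 0)"
  using cmu_halt assms unfolding total_def by blast

lemma total_comp_det: "total orc c F \<Longrightarrow> comp orc c x y \<Longrightarrow> y = F x"
  unfolding total_def using comp_det by blast


named_theorems totr
declare total_czero[totr] total_csucc[totr] total_cfst[totr] total_csnd[totr] total_corc[totr] total_cpair[totr] total_ccomp[totr] total_crec[totr]
lemmas tr = total_czero total_csucc total_cfst total_csnd total_corc total_cpair total_ccomp

definition "cid = cpair cfst csnd"
lemma total_cid[totr]: "total orc cid (\<lambda>x. x)"
  unfolding cid_def by (rule total_ext, rule tr, rule tr, rule tr) simp

fun cconst :: "nat \<Rightarrow> nat" where
  "cconst 0 = czero" | "cconst (Suc k) = ccomp csucc (cconst k)"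
lemma total_cconst[totr]: "total orc (cconst k) (\<lambda>x. k)"
proof (induction k)
  case (Suc k) show ?case by (simp, rule total_ext, rule totr, rule totr, rule Suc, simp)
qed (simp add: total_czero)

definition "ap2 h f g = ccomp h (cpair f g)"
lemma total_ap2[totr]: "total orc h H \<Longrightarrow> total orc f F \<Longrightarrow> total orc g G \<Longrightarrow>
   total orc (ap2 h f g) (\<lambda>x. H (enc (F x, G x)))"
  unfolding ap2_def by (rule total_ext, (rule totr | assumption)+, simp)

definition "c1 = cfst"
definition "c2 = ccomp cfst csnd"
definition "c3 = ccomp csnd csnd"
(* projections of enc(u, enc(n, z)) as used by crec *)

definition "cadd = crec cid (ccomp csucc c3)"
lemma prec_add: "prec (\<lambda>x. x) (\<lambda>v. Suc (snd (dec (snd (dec v))))) u n = u + n"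
  by (induction n) auto
lemma total_cadd[totr]: "total orc cadd (\<lambda>x. fst (dec x) + snd (dec x))"
  unfolding cadd_def c3_def by (rule total_ext, (rule totr)+) (simp add: prec_add[simplified])

definition "cpred = ccomp (crec czero c2) (cpair czero cid)"
lemma total_cpred[totr]: "total orc cpred (\<lambda>x. x - 1)"
proof -
  have h: "prec (\<lambda>x. 0) (\<lambda>v. fst (dec (snd (dec v)))) u n = n - 1" for u n by (cases n) auto
  show ?thesis unfolding cpred_def c2_def
    by (rule total_ext, (rule totr)+) (simp add: h)
qed

definition "csub = crec cid (ccomp cpred c3)"
lemma prec_sub: "prec (\<lambda>x. x) (\<lambda>v. snd (dec (snd (dec v))) - 1) u n = u - n"
  by (induction n) auto
lemma total_csub[totr]: "total orc csub (\<lambda>x. fst (dec x) - snd (dec x))"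
  unfolding csub_def c3_def by (rule total_ext, (rule totr)+) (simp add: prec_sub[simplified])

definition "cifz = crec cfst (ccomp csnd cfst)"
lemma total_cifz[totr]: "total orc cifz (\<lambda>x. if snd (dec x) = 0 then fst (dec (fst (dec x))) else snd (dec (fst (dec x))))"
proof -
  have "prec (\<lambda>x. fst (dec x)) (\<lambda>v. snd (dec (fst (dec v)))) u n = (if n = 0 then fst (dec u) else snd (dec u))" for u n
    by (cases n) auto
  note h = this
  show ?thesis unfolding cifz_def by (rule total_ext, (rule totr)+) (simp add: h)
qed

definition "cmul = crec czero (ap2 cadd c3 cfst)"
lemma prec_mul: "prec (\<lambda>x. 0) (\<lambda>v. snd (dec (snd (dec v))) + fst (dec v)) u n = u * n"
  by (induction n) auto
lemma total_cmul[totr]: "total orc cmul (\<lambda>x. fst (dec x) * snd (dec x))"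
  unfolding cmul_def c3_def by (rule total_ext, (rule totr)+) (simp add: prec_mul[simplified])

definition "ctri = ccomp (crec czero (ap2 cadd c3 (ccomp csucc c2))) (cpair czero cid)"
lemma prec_tri: "prec (\<lambda>x. 0) (\<lambda>v. snd (dec (snd (dec v))) + Suc (fst (dec (snd (dec v))))) u n = triangle n"
  by (induction n) auto
lemma total_ctri[totr]: "total orc ctri triangle"
  unfolding ctri_def c3_def c2_def by (rule total_ext, (rule totr)+) (simp add: prec_tri[simplified])

definition "cenc = ap2 cadd (ccomp ctri cadd) cfst"
lemma total_cenc[totr]: "total orc cenc (\<lambda>x. x)"
proof -
  have h: "triangle (fst (dec x) + snd (dec x)) + fst (dec x) = x" for x
  proof -
    obtain a b where "dec x = (a, b)" by (cases "dec x")
    moreover then have "x = enc (a, b)" by (metis prod_decode_inverse)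
    ultimately show ?thesis by (simp add: prod_encode_def)
  qed
  show ?thesis unfolding cenc_def by (rule total_ext, (rule totr)+) (simp add: h)
qed


definition "citer h = crec csnd (ap2 h (ccomp cfst cfst) c3)"

lemma prec_iter: "prec (\<lambda>x. snd (dec x)) (\<lambda>v. H (enc (fst (dec (fst (dec v))), snd (dec (snd (dec v)))))) u n
   = ((\<lambda>s. H (enc (fst (dec u), s))) ^^ n) (snd (dec u))"
  by (induction n) auto

lemma total_citer[totr]: "total orc h H \<Longrightarrow> total orc (citer h)
  (\<lambda>x. ((\<lambda>s. H (enc (fst (dec (fst (dec x))), s))) ^^ (snd (dec x))) (snd (dec (fst (dec x)))))"
  unfolding citer_def c3_def
  by (rule total_ext, (rule totr | assumption)+) (simp add: prec_iter[simplified])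

datatype ex = Arg | Cst nat | Fst ex | Snd ex | Pair ex ex | Sc ex | Pr ex
  | Add ex ex | Sub ex ex | Mul ex ex | Ifz ex ex ex | Orc ex | Comp ex ex | Iter ex ex ex ex

primrec ev :: "(nat \<Rightarrow> nat) \<Rightarrow> ex \<Rightarrow> nat \<Rightarrow> nat" where
  "ev orc Arg x = x"
| "ev orc (Cst k) x = k"
| "ev orc (Fst e) x = fst (dec (ev orc e x))"
| "ev orc (Snd e) x = snd (dec (ev orc e x))"
| "ev orc (Pair e1 e2) x = enc (ev orc e1 x, ev orc e2 x)"
| "ev orc (Sc e) x = Suc (ev orc e x)"
| "ev orc (Pr e) x = ev orc e x - 1"
| "ev orc (Add e1 e2) x = ev orc e1 x + ev orc e2 x"
| "ev orc (Sub e1 e2) x = ev orc e1 x - ev orc e2 x"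
| "ev orc (Mul e1 e2) x = ev orc e1 x * ev orc e2 x"
| "ev orc (Ifz c e1 e2) x = (if ev orc c x = 0 then ev orc e1 x else ev orc e2 x)"
| "ev orc (Orc e) x = orc (ev orc e x)"
| "ev orc (Comp e1 e2) x = ev orc e1 (ev orc e2 x)"
| "ev orc (Iter s p i n) x = ((\<lambda>z. ev orc s (enc (ev orc p x, z))) ^^ (ev orc n x)) (ev orc i x)"

primrec cx :: "ex \<Rightarrow> nat" where
  "cx Arg = cid"
| "cx (Cst k) = cconst k"
| "cx (Fst e) = ccomp cfst (cx e)"
| "cx (Snd e) = ccomp csnd (cx e)"
| "cx (Pair e1 e2) = cpair (cx e1) (cx e2)"
| "cx (Sc e) = ccomp csucc (cx e)"
| "cx (Pr e) = ccomp cpred (cx e)"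
| "cx (Add e1 e2) = ap2 cadd (cx e1) (cx e2)"
| "cx (Sub e1 e2) = ap2 csub (cx e1) (cx e2)"
| "cx (Mul e1 e2) = ap2 cmul (cx e1) (cx e2)"
| "cx (Ifz c e1 e2) = ccomp cifz (cpair (cpair (cx e1) (cx e2)) (cx c))"
| "cx (Orc e) = ccomp corc (cx e)"
| "cx (Comp e1 e2) = ccomp (cx e1) (cx e2)"
| "cx (Iter s p i n) = ccomp (citer (cx s)) (cpair (cpair (cx p) (cx i)) (cx n))"

theorem total_cx: "total orc (cx e) (ev orc e)"
proof (induction e)
  case (Iter s p i n)
  show ?case by (simp, rule total_ext, (rule totr | rule Iter.IH)+) simp
qed (simp, rule total_ext, (rule totr | assumption)+, simp)+

lemma comp_cx: "comp orc (cx e) x y \<longleftrightarrow> y = ev orc e x"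
  using total_cx total_comp_det unfolding total_def by metis


lemma fst_dec_le: "fst (dec n) \<le> n" by (metis le_prod_encode_1 prod.collapse prod_decode_inverse)
lemma snd_dec_le: "snd (dec n) \<le> n" by (metis le_prod_encode_2 prod.collapse prod_decode_inverse)

lemma dec_0[simp]: "dec 0 = (0, 0)"
  using prod_encode_inverse[of "(0,0)"] by (simp add: prod_encode_def)

primrec lc :: "nat list \<Rightarrow> nat" where
  "lc [] = 0" | "lc (h # t) = Suc (enc (h, lc t))"

function ld :: "nat \<Rightarrow> nat list" where
  "ld 0 = []"
| "ld (Suc n) = fst (dec n) # ld (snd (dec n))"
  apply pat_completeness apply auto done
termination by (relation "Wellfounded.measure id") (auto simp: le_imp_less_Suc snd_dec_le)

lemma ld_lc[simp]: "ld (lc xs) = xs" by (induction xs) auto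
lemma lc_ld[simp]: "lc (ld n) = n" by (induction n rule: ld.induct) auto
lemma length_le_lc: "length xs \<le> lc xs"
  by (induction xs) (auto intro: le_trans[OF _ le_prod_encode_2])
lemma lc_mono_tl: "lc t < lc (h # t)" using le_prod_encode_2 by (simp add: le_imp_less_Suc)

definition "Hd e = Fst (Pr e)"
definition "Tl e = Snd (Pr e)"
definition "CCons a b = Sc (Pair a b)"
lemma ev_Hd[simp]: "ev orc (Hd e) x = (case ld (ev orc e x) of [] \<Rightarrow> 0 | h # t \<Rightarrow> h)"
  by (cases "ev orc e x") (auto simp: Hd_def)
lemma ev_Tl[simp]: "ev orc (Tl e) x = lc (tl (ld (ev orc e x)))"
  by (cases "ev orc e x") (auto simp: Tl_def)
lemma ev_CCons[simp]: "ev orc (CCons a b) x = lc (ev orc a x # ld (ev orc b x))"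
  by (simp add: CCons_def)

definition "Not1 a = Ifz a (Cst 1) (Cst 0)"
definition "And a b = Ifz a (Cst 0) (Ifz b (Cst 0) (Cst 1))"
definition "Or a b = Ifz a (Ifz b (Cst 0) (Cst 1)) (Cst 1)"
definition "Eq a b = Ifz (Add (Sub a b) (Sub b a)) (Cst 1) (Cst 0)"
definition "Lt a b = Ifz (Sub b a) (Cst 0) (Cst 1)"
definition "bv P = (if P then 1 else (0::nat))"
lemma bv_simps[simp]: "bv P \<noteq> 0 \<longleftrightarrow> P" "bv P = 0 \<longleftrightarrow> \<not> P" "bv P = 1 \<longleftrightarrow> P"
  by (auto simp: bv_def)
lemma ev_bool[simp]:
  "ev orc (Not1 a) x = bv (ev orc a x = 0)"
  "ev orc (And a b) x = bv (ev orc a x \<noteq> 0 \<and> ev orc b x \<noteq> 0)"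
  "ev orc (Or a b) x = bv (ev orc a x \<noteq> 0 \<or> ev orc b x \<noteq> 0)"
  "ev orc (Eq a b) x = bv (ev orc a x = ev orc b x)"
  "ev orc (Lt a b) x = bv (ev orc a x < ev orc b x)"
  by (auto simp: Not1_def And_def Or_def Eq_def Lt_def bv_def)

primrec allsuf :: "(nat \<Rightarrow> nat list \<Rightarrow> bool) \<Rightarrow> nat list \<Rightarrow> bool" where
  "allsuf P [] = True"
| "allsuf P (h # t) = (P h t \<and> allsuf P t)"

text \<open>Q is evaluated at enc(param, enc(h, lc t)) for each suffix h # t\<close>
definition "AllSuf Q p l = Snd (Iter (Ifz (Fst (Snd Arg)) (Snd Arg)
     (Pair (Tl (Fst (Snd Arg))) (And (Snd (Snd Arg)) (Comp Q (Pair (Fst Arg) (Pr (Fst (Snd Arg)))))))) p (Pair l (Cst 1)) l)"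

lemma allsuf_iter:
  assumes "n \<ge> length xs" "a \<in> {0, 1}"
  shows "((\<lambda>z. ev orc (Ifz (Fst (Snd Arg)) (Snd Arg)
     (Pair (Tl (Fst (Snd Arg))) (And (Snd (Snd Arg)) (Comp Q (Pair (Fst Arg) (Pr (Fst (Snd Arg)))))))) (enc (p, z))) ^^ n)
     (enc (lc xs, a)) = enc (0, bv (a \<noteq> 0 \<and> allsuf (\<lambda>h t. ev orc Q (enc (p, enc (h, lc t))) \<noteq> 0) xs))"
    (is "(?f ^^ n) _ = _")
proof -
  have f0: "?f (enc (0, b)) = enc (0, b)" for b by simp
  have f1: "?f (enc (lc (h # t), b)) = enc (lc t, bv (b \<noteq> 0 \<and> ev orc Q (enc (p, enc (h, lc t))) \<noteq> 0))" for h t b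
    by simp
  have fp0: "(?f ^^ m) (enc (0, b)) = enc (0, b)" for m b by (induction m) (simp_all add: f0 del: ev.simps)
  show ?thesis using assms
  proof (induction xs arbitrary: n a)
    case Nil
    then show ?case using fp0 by (auto simp: bv_def simp del: ev.simps)
  next
    case (Cons h t)
    then obtain m where n: "n = Suc m" "m \<ge> length t" by (cases n) auto
    have "(?f ^^ n) (enc (lc (h # t), a)) = (?f ^^ m) (?f (enc (lc (h # t), a)))"
      unfolding n(1) funpow_Suc_right o_def ..
    also have "\<dots> = (?f ^^ m) (enc (lc t, bv (a \<noteq> 0 \<and> ev orc Q (enc (p, enc (h, lc t))) \<noteq> 0)))"
      unfolding f1 ..
    also have "\<dots> = enc (0, bv (bv (a \<noteq> 0 \<and> ev orc Q (enc (p, enc (h, lc t))) \<noteq> 0) \<noteq> 0 \<and> allsuf (\<lambda>h t. ev orc Q (enc (p, enc (h, lc t))) \<noteq> 0) t))"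
      by (rule Cons.IH) (use n(2) in \<open>auto simp: bv_def\<close>)
    finally show ?case using Cons.prems by (auto simp: bv_def)
  qed
qed

lemma ev_AllSuf[simp]: "ev orc (AllSuf Q p l) x =
   bv (allsuf (\<lambda>h t. ev orc Q (enc (ev orc p x, enc (h, lc t))) \<noteq> 0) (ld (ev orc l x)))"
proof -
  have "ev orc l x \<ge> length (ld (ev orc l x))" using length_le_lc[of "ld (ev orc l x)"] by simp
  then show ?thesis unfolding AllSuf_def
    using allsuf_iter[of "ld (ev orc l x)" "ev orc l x" 1 orc Q "ev orc p x"] by simp
qed

definition "AnyL Q p l = Not1 (AllSuf (Not1 Q) p l)"
lemma allsuf_nth: "allsuf P xs \<longleftrightarrow> (\<forall>i<length xs. P (xs ! i) (drop (Suc i) xs))"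
proof (induction xs)
  case (Cons a xs) then show ?case
    by (auto simp: nth_Cons' less_Suc_eq_0_disj)
qed simp

definition "mem k R \<longleftrightarrow> (\<exists>E\<in>set R. fst (dec E) = k)"
definition "Mem k l = AnyL (Eq (Fst (Fst (Snd Arg))) (Fst Arg)) k l"
lemma ev_Mem[simp]: "ev orc (Mem k l) x = bv (mem (ev orc k x) (ld (ev orc l x)))"
proof -
  have "\<not> (\<forall>i<length xs. fst (dec (xs ! i)) \<noteq> k) \<longleftrightarrow> mem k xs" for xs k
    unfolding mem_def by (metis in_set_conv_nth)
  then show ?thesis unfolding Mem_def AnyL_def
    by (simp add: allsuf_nth)
qed


definition "Len l = Snd (Iter (Ifz (Fst (Snd Arg)) (Snd Arg) (Pair (Tl (Fst (Snd Arg))) (Sc (Snd (Snd Arg))))) (Cst 0) (Pair l (Cst 0)) l)"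
lemma ev_Len[simp]: "ev orc (Len l) x = length (ld (ev orc l x))"
proof -
  let ?f = "\<lambda>z. ev orc (Ifz (Fst (Snd Arg)) (Snd Arg) (Pair (Tl (Fst (Snd Arg))) (Sc (Snd (Snd Arg))))) (enc (0, z))"
  have f0: "(?f ^^ m) (enc (0, b)) = enc (0, b)" for m b by (induction m) simp_all
  have "n \<ge> length xs \<Longrightarrow> (?f ^^ n) (enc (lc xs, a)) = enc (0, a + length xs)" for n xs a
  proof (induction xs arbitrary: n a)
    case Nil then show ?case using f0 by simp
  next
    case (Cons h t)
    then obtain m where n: "n = Suc m" "m \<ge> length t" by (cases n) auto
    have "(?f ^^ n) (enc (lc (h # t), a)) = (?f ^^ m) (enc (lc t, Suc a))"
      unfolding n(1) funpow_Suc_right o_def by simp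
    also have "\<dots> = enc (0, Suc a + length t)" using Cons.IH n(2) by blast
    finally show ?case by simp
  qed
  from this[of "ld (ev orc l x)" "ev orc l x" 0] show ?thesis
    unfolding Len_def using length_le_lc[of "ld (ev orc l x)"] by simp
qed

definition "Nth l i = Hd (Iter (Tl (Snd Arg)) (Cst 0) l i)"
lemma ev_Nth[simp]: "ev orc i x < length (ld (ev orc l x)) \<Longrightarrow> ev orc (Nth l i) x = ld (ev orc l x) ! ev orc i x"
proof -
  let ?f = "\<lambda>z. ev orc (Tl (Snd Arg)) (enc (0, z))"
  have "(?f ^^ n) (lc xs) = lc (drop n xs)" for n xs
    by (induction n) (simp_all add: drop_Suc tl_drop)
  from this[of _ "ld (ev orc l x)"] have h: "(?f ^^ n) (ev orc l x) = lc (drop n (ld (ev orc l x)))" for n by simp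
  assume "ev orc i x < length (ld (ev orc l x))"
  then show ?thesis unfolding Nth_def
    by (simp only: ev.simps ev_Hd h ld_lc Cons_nth_drop_Suc[symmetric]) simp
qed

definition "RevApp a b = Snd (Iter (Ifz (Fst (Snd Arg)) (Snd Arg) (Pair (Tl (Fst (Snd Arg))) (CCons (Hd (Fst (Snd Arg))) (Snd (Snd Arg))))) (Cst 0) (Pair a b) a)"
lemma ev_RevApp[simp]: "ev orc (RevApp a b) x = lc (rev (ld (ev orc a x)) @ ld (ev orc b x))"
proof -
  let ?f = "\<lambda>z. ev orc (Ifz (Fst (Snd Arg)) (Snd Arg) (Pair (Tl (Fst (Snd Arg))) (CCons (Hd (Fst (Snd Arg))) (Snd (Snd Arg))))) (enc (0, z))"
  have f0: "(?f ^^ m) (enc (0, b)) = enc (0, b)" for m b by (induction m) simp_all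
  have "n \<ge> length xs \<Longrightarrow> (?f ^^ n) (enc (lc xs, lc ys)) = enc (0, lc (rev xs @ ys))" for n xs ys
  proof (induction xs arbitrary: n ys)
    case Nil then show ?case using f0 by simp
  next
    case (Cons h t)
    then obtain m where n: "n = Suc m" "m \<ge> length t" by (cases n) auto
    have "(?f ^^ n) (enc (lc (h # t), lc ys)) = (?f ^^ m) (enc (lc t, lc (h # ys)))"
      unfolding n(1) funpow_Suc_right o_def by simp
    also have "\<dots> = enc (0, lc (rev t @ h # ys))" using Cons.IH n(2) by blast
    finally show ?case by simp
  qed
  from this[of "ld (ev orc a x)" "ev orc a x" "ld (ev orc b x)"] show ?thesis
    unfolding RevApp_def using length_le_lc[of "ld (ev orc a x)"] by simp
qed

definition "App a b = RevApp (RevApp a (Cst 0)) b"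
lemma ev_App[simp]: "ev orc (App a b) x = lc (ld (ev orc a x) @ ld (ev orc b x))"
  by (simp add: App_def)

definition "DM e = Iter (Ifz (Sub (Cst 8) (Snd (Snd Arg))) (Pair (Sc (Fst (Snd Arg))) (Cst 0)) (Pair (Fst (Snd Arg)) (Sc (Snd (Snd Arg))))) (Cst 0) (Cst 0) e"
definition "Mod9 e = Snd (DM e)"
definition "Div9 e = Fst (DM e)"
lemma ev_DM: "ev orc (DM e) x = enc (ev orc e x div 9, ev orc e x mod 9)"
proof -
  let ?f = "\<lambda>z. ev orc (Ifz (Sub (Cst 8) (Snd (Snd Arg))) (Pair (Sc (Fst (Snd Arg))) (Cst 0)) (Pair (Fst (Snd Arg)) (Sc (Snd (Snd Arg))))) (enc (0, z))"
  have e00: "enc (0, 0) = 0" by (simp add: prod_encode_def)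
  have "(?f ^^ n) 0 = enc (n div 9, n mod 9)" for n
  proof (induction n)
    case (Suc n)
    have "n mod 9 < 9" by simp
    then show ?case using Suc by (auto simp: div_Suc mod_Suc)
  qed (simp add: e00)
  note h = this
  show ?thesis unfolding DM_def by (simp only: ev.simps(2) ev.simps(14) h)
qed
lemma ev_Mod9[simp]: "ev orc (Mod9 e) x = ev orc e x mod 9" by (simp add: Mod9_def ev_DM)
lemma ev_Div9[simp]: "ev orc (Div9 e) x = ev orc e x div 9" by (simp add: Div9_def ev_DM)


definition K :: "nat \<Rightarrow> nat \<Rightarrow> nat \<Rightarrow> nat \<Rightarrow> nat" where "K t c x y = enc (t, enc (c, enc (x, y)))"

lemma K_inj[simp]: "K t c x y = K t' c' x' y' \<longleftrightarrow> t = t' \<and> c = c' \<and> x = x' \<and> y = y'"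
  unfolding K_def by (metis prod_encode_inverse prod.inject)

definition justf :: "(nat \<Rightarrow> nat \<Rightarrow> bool) \<Rightarrow> nat \<Rightarrow> nat \<Rightarrow> nat \<Rightarrow> nat \<Rightarrow> nat \<Rightarrow> nat list \<Rightarrow> bool" where
"justf Q t c x y h R = (let m = c mod 9; f = fst (dec (c div 9)); g = snd (dec (c div 9)) in
 if t = 0 then (if m = 0 then y = 0 else if m = 1 then y = Suc x else if m = 2 then y = fst (dec x)
   else if m = 3 then y = snd (dec x)
   else if m = 4 then mem (K 0 f x (fst (dec y))) R \<and> mem (K 0 g x (snd (dec y))) R
   else if m = 5 then mem (K 0 g x h) R \<and> mem (K 0 f h y) R
   else if m = 6 then Q x y
   else if m = 7 then (if snd (dec x) = 0 then mem (K 0 f (fst (dec x)) y) R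
        else mem (K 0 c (enc (fst (dec x), snd (dec x) - 1)) h) R \<and>
             mem (K 0 g (enc (fst (dec x), enc (snd (dec x) - 1, h))) y) R)
   else mem (K 0 (c div 9) (enc (x, y)) 0) R \<and> mem (K 1 c x y) R)
 else if t = 1 then (y = 0 \<or> (0 < h \<and> mem (K 1 c x (y - 1)) R \<and> mem (K 0 (c div 9) (enc (x, y - 1)) h) R))
 else False)"

definition fields :: "nat \<Rightarrow> nat \<times> nat \<times> nat \<times> nat \<times> nat" where
  "fields E = (let k = fst (dec E) in (fst (dec k), fst (dec (snd (dec k))), fst (dec (snd (dec (snd (dec k))))),
      snd (dec (snd (dec (snd (dec k))))), snd (dec E)))"

lemma fields_enc[simp]: "fields (enc (K t c x y, h)) = (t, c, x, y, h)"
  by (simp add: fields_def K_def)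

lemma fields_surj: "\<exists>t c x y h. E = enc (K t c x y, h)"
proof -
  obtain k h where "dec E = (k, h)" by (cases "dec E")
  moreover obtain t r1 where "dec k = (t, r1)" by (cases "dec k")
  moreover obtain c r2 where "dec r1 = (c, r2)" by (cases "dec r1")
  moreover obtain x y where "dec r2 = (x, y)" by (cases "dec r2")
  ultimately show ?thesis unfolding K_def by (metis prod_decode_inverse)
qed

definition just :: "(nat \<Rightarrow> nat \<Rightarrow> bool) \<Rightarrow> nat \<Rightarrow> nat list \<Rightarrow> bool" where
  "just Q E R = (case fields E of (t, c, x, y, h) \<Rightarrow> justf Q t c x y h R)"

primrec valid :: "(nat \<Rightarrow> nat \<Rightarrow> bool) \<Rightarrow> nat list \<Rightarrow> bool" where
  "valid Q [] = True"
| "valid Q (E # R) = (just Q E R \<and> valid Q R)"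

definition muok :: "(nat \<Rightarrow> nat) \<Rightarrow> nat \<Rightarrow> nat \<Rightarrow> nat \<Rightarrow> bool" where
  "muok orc c x y = (\<forall>z<y. \<exists>w>0. comp orc (c div 9) (enc (x, z)) w)"

definition semk :: "(nat \<Rightarrow> nat) \<Rightarrow> nat \<Rightarrow> bool" where
  "semk orc k = (let t = fst (dec k); c = fst (dec (snd (dec k))); x = fst (dec (snd (dec (snd (dec k)))));
      y = snd (dec (snd (dec (snd (dec k))))) in
     if t = 0 then comp orc c x y else if t = 1 then muok orc c x y else True)"

lemma semk_K[simp]: "semk orc (K t c x y) = (if t = 0 then comp orc c x y else if t = 1 then muok orc c x y else True)"
  by (simp add: semk_def K_def)

lemma mem_sem: "mem k R \<Longrightarrow> \<forall>E\<in>set R. semk orc (fst (dec E)) \<Longrightarrow> semk orc k"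
  unfolding mem_def by blast

lemma nine_cases: "(k::nat) < 9 \<Longrightarrow> k = 0 \<or> k = 1 \<or> k = 2 \<or> k = 3 \<or> k = 4 \<or> k = 5 \<or> k = 6 \<or> k = 7 \<or> k = 8"
  by linarith

lemma dec_div9: "dec (c div 9) = (fst (dec (c div 9)), snd (dec (c div 9)))" by simp

lemma justf_sound:
  assumes j: "justf Q t c x y h R" and Q: "\<forall>a b. Q a b \<longrightarrow> b = orc a"
    and R: "\<forall>E\<in>set R. semk orc (fst (dec E))"
  shows "semk orc (K t c x y)"
proof -
  have M: "\<And>t c x y. mem (K t c x y) R \<Longrightarrow> semk orc (K t c x y)" using R mem_sem by blast
  have M0: "\<And>c x y. mem (K 0 c x y) R \<Longrightarrow> comp orc c x y" using M by fastforce
  have M1: "\<And>c x y. mem (K 1 c x y) R \<Longrightarrow> muok orc c x y" using M by fastforce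
  let ?f = "fst (dec (c div 9))" and ?g = "snd (dec (c div 9))"
  have cm: "c mod 9 < 9" by simp
  show ?thesis
  proof (cases "t = 0")
    case True
    then have j0: "justf Q 0 c x y h R" using j by simp
    have "comp orc c x y"
    proof -
      consider "c mod 9 = 0" | "c mod 9 = 1" | "c mod 9 = 2" | "c mod 9 = 3" | "c mod 9 = 4" | "c mod 9 = 5"
        | "c mod 9 = 6" | "c mod 9 = 7" | "c mod 9 = 8" using nine_cases[OF cm] by metis
      then show ?thesis
      proof cases
        case 1 then show ?thesis using j0 by (simp add: justf_def Let_def comp.c_zero)
      next
        case 2 then show ?thesis using j0 by (simp add: justf_def Let_def comp.c_succ)
      next
        case 3 then show ?thesis using j0 by (simp add: justf_def Let_def comp.c_fst)
      next
        case 4 then show ?thesis using j0 by (simp add: justf_def Let_def comp.c_snd)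
      next
        case 5
        then have "mem (K 0 ?f x (fst (dec y))) R \<and> mem (K 0 ?g x (snd (dec y))) R" using j0 by (simp add: justf_def Let_def)
        then have "comp orc ?f x (fst (dec y))" "comp orc ?g x (snd (dec y))" using M0 by blast+
        then have "comp orc c x (enc (fst (dec y), snd (dec y)))" by (rule comp.c_pair[OF 5 dec_div9])
        then show ?thesis by simp
      next
        case 6
        then have "mem (K 0 ?g x h) R \<and> mem (K 0 ?f h y) R" using j0 by (simp add: justf_def Let_def)
        then have "comp orc ?g x h" "comp orc ?f h y" using M0 by blast+
        then show ?thesis by (intro comp.c_comp[OF 6 dec_div9])
      next
        case 7 then have "Q x y" using j0 by (simp add: justf_def Let_def)
        then have "y = orc x" using Q by blast
        then show ?thesis using 7 by (simp add: comp.c_oracle)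
      next
        case 8
        obtain u n where x: "dec x = (u, n)" by (cases "dec x")
        show ?thesis
        proof (cases n)
          case 0
          then have "mem (K 0 ?f u y) R" using j0 8 x by (simp add: justf_def Let_def)
          then have "comp orc ?f u y" using M0 by blast
          then show ?thesis using x 0 by (intro comp.c_rec0[OF 8 dec_div9]) auto
        next
          case (Suc n')
          then have "mem (K 0 c (enc (u, n')) h) R \<and> mem (K 0 ?g (enc (u, enc (n', h))) y) R" using j0 8 x by (simp add: justf_def Let_def)
          then have "comp orc c (enc (u, n')) h" "comp orc ?g (enc (u, enc (n', h))) y" using M0 by blast+
          then show ?thesis using x Suc by (intro comp.c_recS[OF 8 dec_div9, of x u n']) auto
        qed
      next
        case 9
        then have "mem (K 0 (c div 9) (enc (x, y)) 0) R \<and> mem (K 1 c x y) R" using j0 by (simp add: justf_def Let_def)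
        then have "comp orc (c div 9) (enc (x, y)) 0" "muok orc c x y" using M0 M1 by blast+
        then show ?thesis using 9 by (intro comp.c_mu[OF 9]) (auto simp: muok_def)
      qed
    qed
    then show ?thesis using True by simp
  next
    case False
    show ?thesis
    proof (cases "t = 1")
      case True
      then have j1: "y = 0 \<or> (0 < h \<and> mem (K 1 c x (y - 1)) R \<and> mem (K 0 (c div 9) (enc (x, y - 1)) h) R)"
        using j by (simp add: justf_def)
      have "muok orc c x y"
      proof (cases "y = 0")
        case True then show ?thesis by (simp add: muok_def)
      next
        case False
        then have "0 < h" "muok orc c x (y - 1)" "comp orc (c div 9) (enc (x, y - 1)) h"
          using j1 M0 M1 by auto
        then show ?thesis unfolding muok_def using False by (metis less_Suc_eq Suc_pred' not_gr_zero)
      qed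
      then show ?thesis using True by simp
    next
      case False
      then show ?thesis using \<open>t \<noteq> 0\<close> by simp
    qed
  qed
qed

lemma valid_sound: "valid Q L \<Longrightarrow> \<forall>a b. Q a b \<longrightarrow> b = orc a \<Longrightarrow> \<forall>E\<in>set L. semk orc (fst (dec E))"
proof (induction L)
  case (Cons E R)
  obtain t c x y h where E: "E = enc (K t c x y, h)" using fields_surj by blast
  have "justf Q t c x y h R" using Cons.prems E by (simp add: just_def)
  then have "semk orc (K t c x y)" using justf_sound Cons by simp
  then show ?case using Cons E by simp
qed simp

corollary valid_comp: "valid Q L \<Longrightarrow> \<forall>a b. Q a b \<longrightarrow> b = orc a \<Longrightarrow> mem (K 0 c x y) L \<Longrightarrow> comp orc c x y"
  using valid_sound mem_sem semk_K by (metis)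


lemma justf_mono:
  assumes "justf Q t c x y h R" "\<And>k. mem k R \<Longrightarrow> mem k R'" "\<And>a b. Q a b \<Longrightarrow> Q' a b"
  shows "justf Q' t c x y h R'"
  using assms unfolding justf_def Let_def by (simp split: if_splits) blast+

lemma mem_app: "mem k A \<Longrightarrow> mem k (A @ B)" "mem k B \<Longrightarrow> mem k (A @ B)" "mem k R \<Longrightarrow> mem k (E # R)"
  by (auto simp: mem_def)

lemma just_mono: "just Q E R \<Longrightarrow> (\<And>k. mem k R \<Longrightarrow> mem k R') \<Longrightarrow> (\<And>a b. Q a b \<Longrightarrow> Q' a b) \<Longrightarrow> just Q' E R'"
  unfolding just_def by (auto split: prod.splits intro: justf_mono)

lemma valid_app: "valid Q A \<Longrightarrow> valid Q B \<Longrightarrow> valid Q (A @ B)"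
  by (induction A) (auto intro: just_mono mem_app)

lemma valid_monoQ: "valid Q L \<Longrightarrow> (\<And>a b. Q a b \<Longrightarrow> Q' a b) \<Longrightarrow> valid Q' L"
  by (induction L) (auto intro: just_mono)

lemma just_K: "just Q (enc (K t c x y, h)) R = justf Q t c x y h R"
  by (simp add: just_def)

lemma mem_head: "mem (K t c x y) (enc (K t c x y, h) # R)" by (simp add: mem_def)

lemma muok_deriv:
  assumes "\<forall>z<y. \<exists>w>0. \<exists>L. valid Q L \<and> mem (K 0 (c div 9) (enc (x, z)) w) L"
  shows "\<exists>L. valid Q L \<and> mem (K 1 c x y) L"
  using assms
proof (induction y)
  case 0
  have "justf Q 1 c x 0 0 []" by (simp add: justf_def)
  then show ?case by (intro exI[of _ "[enc (K 1 c x 0, 0)]"]) (simp add: just_K mem_head)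
next
  case (Suc y)
  then obtain L1 where L1: "valid Q L1" "mem (K 1 c x y) L1" by auto
  obtain w L2 where L2: "0 < w" "valid Q L2" "mem (K 0 (c div 9) (enc (x, y)) w) L2" using Suc.prems by blast
  have "justf Q 1 c x (Suc y) w (L1 @ L2)" using L1 L2 by (simp add: justf_def mem_app)
  then show ?case using L1 L2
    by (intro exI[of _ "enc (K 1 c x (Suc y), w) # (L1 @ L2)"]) (simp add: just_K mem_head valid_app)
qed

theorem comp_deriv: "comp orc c x y \<Longrightarrow> \<exists>L. valid (\<lambda>a b. b = orc a) L \<and> mem (K 0 c x y) L"
proof (induction rule: comp.induct)
  case (c_zero c x)
  then show ?case by (intro exI[of _ "[enc (K 0 c x 0, 0)]"]) (simp add: just_K mem_head justf_def)
next
  case (c_succ c x)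
  then show ?case by (intro exI[of _ "[enc (K 0 c x (Suc x), 0)]"]) (simp add: just_K mem_head justf_def)
next
  case (c_fst c x)
  then show ?case by (intro exI[of _ "[enc (K 0 c x (fst (dec x)), 0)]"]) (simp add: just_K mem_head justf_def)
next
  case (c_snd c x)
  then show ?case by (intro exI[of _ "[enc (K 0 c x (snd (dec x)), 0)]"]) (simp add: just_K mem_head justf_def)
next
  case (c_oracle c x)
  then show ?case by (intro exI[of _ "[enc (K 0 c x (orc x), 0)]"]) (simp add: just_K mem_head justf_def)
next
  case (c_pair c f g x y z)
  then obtain L1 L2 where L: "valid (\<lambda>a b. b = orc a) L1" "mem (K 0 f x y) L1"
    "valid (\<lambda>a b. b = orc a) L2" "mem (K 0 g x z) L2" by blast
  have "justf (\<lambda>a b. b = orc a) 0 c x (enc (y, z)) 0 (L1 @ L2)" using L c_pair.hyps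
    by (simp add: justf_def mem_app)
  then show ?case using L
    by (intro exI[of _ "enc (K 0 c x (enc (y, z)), 0) # (L1 @ L2)"]) (simp add: just_K mem_head valid_app)
next
  case (c_comp c f g x y z)
  then obtain L1 L2 where L: "valid (\<lambda>a b. b = orc a) L1" "mem (K 0 g x y) L1"
    "valid (\<lambda>a b. b = orc a) L2" "mem (K 0 f y z) L2" by blast
  have "justf (\<lambda>a b. b = orc a) 0 c x z y (L1 @ L2)" using L c_comp.hyps
    by (simp add: justf_def mem_app)
  then show ?case using L
    by (intro exI[of _ "enc (K 0 c x z, y) # (L1 @ L2)"]) (simp add: just_K mem_head valid_app)
next
  case (c_rec0 c f g x u y)
  then obtain L1 where L: "valid (\<lambda>a b. b = orc a) L1" "mem (K 0 f u y) L1" by blast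
  have "justf (\<lambda>a b. b = orc a) 0 c x y 0 L1" using L c_rec0.hyps
    by (simp add: justf_def)
  then show ?case using L
    by (intro exI[of _ "enc (K 0 c x y, 0) # L1"]) (simp add: just_K mem_head)
next
  case (c_recS c f g x u n z y)
  then obtain L1 L2 where L: "valid (\<lambda>a b. b = orc a) L1" "mem (K 0 c (enc (u, n)) z) L1"
    "valid (\<lambda>a b. b = orc a) L2" "mem (K 0 g (enc (u, enc (n, z))) y) L2" by blast
  have "justf (\<lambda>a b. b = orc a) 0 c x y z (L1 @ L2)" using L c_recS.hyps
    by (simp add: justf_def mem_app)
  then show ?case using L
    by (intro exI[of _ "enc (K 0 c x y, z) # (L1 @ L2)"]) (simp add: just_K mem_head valid_app)
next
  case (c_mu c x y)
  then obtain L1 where L1: "valid (\<lambda>a b. b = orc a) L1" "mem (K 0 (c div 9) (enc (x, y)) 0) L1" by blast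
  have "\<forall>z<y. \<exists>w>0. \<exists>L. valid (\<lambda>a b. b = orc a) L \<and> mem (K 0 (c div 9) (enc (x, z)) w) L"
    using c_mu(4) by blast
  then obtain L2 where L2: "valid (\<lambda>a b. b = orc a) L2" "mem (K 1 c x y) L2"
    using muok_deriv by blast
  have "justf (\<lambda>a b. b = orc a) 0 c x y 0 (L1 @ L2)" using L1 L2 c_mu(1)
    by (simp add: justf_def mem_app)
  then show ?case using L1 L2
    by (intro exI[of _ "enc (K 0 c x y, 0) # (L1 @ L2)"]) (simp add: just_K mem_head valid_app)
qed

lemma x_le_E: "x \<le> enc (K t c x y, h)"
proof -
  have "x \<le> enc (x, y)" by (rule le_prod_encode_1)
  also have "\<dots> \<le> enc (c, enc (x, y))" by (rule le_prod_encode_2)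
  also have "\<dots> \<le> K t c x y" unfolding K_def by (rule le_prod_encode_2)
  also have "\<dots> \<le> enc (K t c x y, h)" by (rule le_prod_encode_1)
  finally show ?thesis .
qed

lemma valid_restrict: "valid Q L \<Longrightarrow> \<forall>E\<in>set L. E < N \<Longrightarrow> valid (\<lambda>a b. a < N \<and> Q a b) L"
proof (induction L)
  case (Cons E R)
  obtain t c x y h where E: "E = enc (K t c x y, h)" using fields_surj by blast
  have "x < N" using Cons.prems(2) E x_le_E by (metis le_less_trans list.set_intros(1))
  have "justf Q t c x y h R" using Cons.prems E by (simp add: just_K)
  then have "justf (\<lambda>a b. a < N \<and> Q a b) t c x y h R" using \<open>x < N\<close>
    unfolding justf_def Let_def by (simp split: if_splits)
  then show ?case using Cons E by (simp add: just_K)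
qed simp


definition Om :: "nat \<Rightarrow> nat \<Rightarrow> nat \<Rightarrow> bool" where
  "Om md a b = (if md = 0 then b = 0 else a < length (ld (md - 1)) \<and> b = ld (md - 1) ! a)"

definition "KX t c x y = Pair t (Pair c (Pair x y))"
lemma ev_KX[simp]: "ev orc (KX t c x y) z = K (ev orc t z) (ev orc c z) (ev orc x z) (ev orc y z)"
  by (simp add: KX_def K_def)

definition "OChk md x y = Ifz md (Eq y (Cst 0)) (And (Lt x (Len (Pr md))) (Eq y (Nth (Pr md) x)))"
lemma ev_OChk[simp]: "ev orc (OChk md x y) z = bv (Om (ev orc md z) (ev orc x z) (ev orc y z))"
  by (cases "ev orc x z < length (ld (ev orc md z - 1))") (auto simp: OChk_def Om_def)

definition "Sel9 m A0 A1 A2 A3 A4 A5 A6 A7 A8 =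
  Ifz (Eq m (Cst 0)) (Ifz (Eq m (Cst 1)) (Ifz (Eq m (Cst 2)) (Ifz (Eq m (Cst 3)) (Ifz (Eq m (Cst 4))
  (Ifz (Eq m (Cst 5)) (Ifz (Eq m (Cst 6)) (Ifz (Eq m (Cst 7)) A8 A7) A6) A5) A4) A3) A2) A1) A0"

lemma ev_Sel9: "ev orc m z < 9 \<Longrightarrow> ev orc (Sel9 m A0 A1 A2 A3 A4 A5 A6 A7 A8) z =
  (if ev orc m z = 0 then ev orc A0 z else if ev orc m z = 1 then ev orc A1 z else if ev orc m z = 2 then ev orc A2 z
   else if ev orc m z = 3 then ev orc A3 z else if ev orc m z = 4 then ev orc A4 z else if ev orc m z = 5 then ev orc A5 z
   else if ev orc m z = 6 then ev orc A6 z else if ev orc m z = 7 then ev orc A7 z else ev orc A8 z)"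
  unfolding Sel9_def by simp

definition "JustX = (let md = Fst Arg; E = Fst (Snd Arg); R = Snd (Snd Arg);
  k = Fst E; h = Snd E; t = Fst k; c = Fst (Snd k); x = Fst (Snd (Snd k)); y = Snd (Snd (Snd k));
  d = Div9 c; f = Fst d; g = Snd d; Z = Cst 0; Mm = (\<lambda>key. Mem key R) in
  Ifz t
   (Sel9 (Mod9 c)
     (Eq y Z) (Eq y (Sc x)) (Eq y (Fst x)) (Eq y (Snd x))
     (And (Mm (KX Z f x (Fst y))) (Mm (KX Z g x (Snd y))))
     (And (Mm (KX Z g x h)) (Mm (KX Z f h y)))
     (OChk md x y)
     (Ifz (Snd x) (Mm (KX Z f (Fst x) y))
        (And (Mm (KX Z c (Pair (Fst x) (Pr (Snd x))) h)) (Mm (KX Z g (Pair (Fst x) (Pair (Pr (Snd x)) h)) y))))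
     (And (Mm (KX Z d (Pair x y) Z)) (Mm (KX (Cst 1) c x y))))
   (Ifz (Pr t)
     (Or (Eq y Z) (And (Lt Z h) (And (Mm (KX (Cst 1) c x (Pr y))) (Mm (KX Z d (Pair x (Pr y)) h)))))
     Z))"

lemma ev_JustX: "ev orc JustX (enc (md, enc (E, R))) = bv (just (Om md) E (ld R))"
proof -
  obtain t c x y h where E: "E = enc (K t c x y, h)" using fields_surj by blast
  have cm: "c mod 9 < 9" by simp
  show ?thesis
  proof (cases "t = 0")
    case True
    then show ?thesis unfolding E just_K JustX_def Let_def
      using nine_cases[OF cm] by (simp add: ev_Sel9 justf_def K_def)
  next
    case False
    then show ?thesis unfolding E just_K JustX_def Let_def
      by (simp add: justf_def K_def conj_commute conj_left_commute)
  qed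
qed

lemma valid_allsuf: "valid Q xs = allsuf (\<lambda>h t. just Q h t) xs"
  by (induction xs) auto

definition "ValidX md l = AllSuf JustX md l"
lemma ev_ValidX[simp]: "ev orc (ValidX md l) z = bv (valid (Om (ev orc md z)) (ld (ev orc l z)))"
  by (simp add: ValidX_def ev_JustX valid_allsuf)

definition "HC md e x y l = And (ValidX md l) (Mem (KX (Cst 0) e x y) l)"
lemma ev_HC[simp]: "ev orc (HC md e x y l) z = bv (valid (Om (ev orc md z)) (ld (ev orc l z)) \<and>
   mem (K 0 (ev orc e z) (ev orc x z) (ev orc y z)) (ld (ev orc l z)))"
  by (simp add: HC_def)

lemma Om0: "Om 0 = (\<lambda>a b. b = 0)" by (simp add: Om_def fun_eq_iff)
lemma OmS: "Om (Suc (lc tau)) = (\<lambda>a b. a < length tau \<and> b = tau ! a)" by (simp add: Om_def fun_eq_iff)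

theorem halt0_iff: "(\<exists>y. comp (\<lambda>_. 0) e x y) \<longleftrightarrow> (\<exists>y L. valid (Om 0) L \<and> mem (K 0 e x y) L)"
  unfolding Om0 using comp_deriv valid_comp by fastforce


lemma comp_ccomp_inv: assumes "comp orc (ccomp f g) x r" shows "\<exists>y. comp orc g x y \<and> comp orc f y r"
  using assms
proof (cases rule: comp.cases)
  case (c_comp f' g' y) then show ?thesis by auto
qed (simp_all only: code_simps; simp)+

lemma smn: "comp orc (ccomp M (cpair (cconst k) cid)) x r \<longleftrightarrow> comp orc M (enc (k, x)) r"
proof
  assume "comp orc (ccomp M (cpair (cconst k) cid)) x r"
  then obtain y where y: "comp orc (cpair (cconst k) cid) x y" "comp orc M y r" using comp_ccomp_inv by blast
  have "comp orc (cpair (cconst k) cid) x (enc (k, x))" using total_cpair[OF total_cconst total_cid] unfolding total_def by simp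
  then have "y = enc (k, x)" using y(1) comp_det by blast
  then show "comp orc M (enc (k, x)) r" using y(2) by simp
next
  assume "comp orc M (enc (k, x)) r"
  moreover have "comp orc (cpair (cconst k) cid) x (enc (k, x))" using total_cpair[OF total_cconst total_cid] unfolding total_def by simp
  moreover have d: "dec (ccomp M (cpair (cconst k) cid) div 9) = (M, cpair (cconst k) cid)" by simp
  ultimately show "comp orc (ccomp M (cpair (cconst k) cid)) x r" using comp.c_comp[OF code_simps(3)] by blast
qed

definition "CComp a b = Add (Cst 5) (Mul (Cst 9) (Pair a b))"
definition "CPair a b = Add (Cst 4) (Mul (Cst 9) (Pair a b))"
definition "CMu a = Add (Cst 8) (Mul (Cst 9) a)"
definition "CC e = Iter (CComp (Cst csucc) (Snd Arg)) (Cst 0) (Cst 0) e"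
lemma ev_code[simp]:
  "ev orc (CComp a b) z = ccomp (ev orc a z) (ev orc b z)"
  "ev orc (CPair a b) z = cpair (ev orc a z) (ev orc b z)"
  "ev orc (CMu a) z = cmu (ev orc a z)"
  by (simp_all add: CComp_def CPair_def CMu_def ccomp_def cpair_def cmu_def)
lemma ev_CC[simp]: "ev orc (CC e) z = cconst (ev orc e z)"
proof -
  have "((\<lambda>z. ev orc (CComp (Cst csucc) (Snd Arg)) (enc (0, z))) ^^ n) 0 = cconst n" for n
    by (induction n) (simp_all add: czero_def)
  then show ?thesis by (simp add: CC_def del: ev_code)
qed

definition "SMN M e = CComp (Cst M) (CPair (CC e) (Cst cid))"
lemma ev_SMN[simp]: "ev orc (SMN M e) z = ccomp M (cpair (cconst (ev orc e z)) cid)"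
  by (simp add: SMN_def)

lemma ex_dec3: "(\<exists>t. P (fst (dec t)) (fst (dec (snd (dec t)))) (snd (dec (snd (dec t))))) \<longleftrightarrow> (\<exists>a b c. P a b c)"
  by (metis fst_conv prod_encode_inverse snd_conv)

lemma cmu_iff:
  assumes "total orc f F"
  shows "(\<exists>r. comp orc (cmu f) x r) \<longleftrightarrow> (\<exists>t. F (enc (x, t)) = 0)"
  using cmu_halt[OF assms] cmu_inv[OF assms] by blast

definition "FA = Not1 (HC (Cst 0) (Fst (Fst Arg)) (Orc (Fst (Snd Arg))) (Fst (Snd (Snd Arg))) (Snd (Snd (Snd Arg))))"
definition "MA = cmu (cx FA)"

lemma MA_iff: "(\<exists>r. comp p MA (enc (e, z)) r) \<longleftrightarrow> (\<exists>n y L. valid (Om 0) L \<and> mem (K 0 e (p n) y) L)"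
proof -
  have "(\<exists>r. comp p MA (enc (e, z)) r) \<longleftrightarrow> (\<exists>t. ev p FA (enc (enc (e, z), t)) = 0)"
    unfolding MA_def by (rule cmu_iff[OF total_cx])
  also have "\<dots> \<longleftrightarrow> (\<exists>n y L. valid (Om 0) (ld L) \<and> mem (K 0 e (p n) y) (ld L))"
    unfolding FA_def by (simp add: ex_dec3[where P="\<lambda>n y L. valid (Om 0) (ld L) \<and> mem (K 0 e (p n) y) (ld L)"])
  also have "\<dots> \<longleftrightarrow> (\<exists>n y L. valid (Om 0) L \<and> mem (K 0 e (p n) y) L)"
    by (metis ld_lc)
  finally show ?thesis .
qed

theorem partA:
  assumes "range p = Nbase a x"
  shows "turing_le (pjump a x) (fjump p)"
proof -
  have key: "ccomp MA (cpair (cconst n) cid) \<in> fjump p \<longleftrightarrow> n \<in> pjump a x" for n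
  proof -
    have "ccomp MA (cpair (cconst n) cid) \<in> fjump p \<longleftrightarrow> (\<exists>r. comp p MA (enc (n, ccomp MA (cpair (cconst n) cid))) r)"
      unfolding fjump_def using smn by blast
    also have "\<dots> \<longleftrightarrow> (\<exists>m y. comp (\<lambda>_. 0) n (p m) y)"
      unfolding MA_iff halt0_iff by blast
    also have "\<dots> \<longleftrightarrow> (\<exists>k\<in>W n. k \<in> range p)" unfolding W_def by blast
    also have "\<dots> \<longleftrightarrow> n \<in> pjump a x" unfolding assms pjump_def Nbase_def by blast
    finally show ?thesis .
  qed
  have "comp (chi (fjump p)) (cx (Orc (SMN MA Arg))) n (chi (pjump a x) n)" for n
    unfolding comp_cx by (simp only: ev.simps ev_SMN key chi_def)
  then show ?thesis unfolding turing_le_def by blast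
qed


definition Dq :: "nat \<Rightarrow> nat \<Rightarrow> nat" where
  "Dq r r' = Suc (fst (dec r')) * Suc (snd (dec r)) - Suc (fst (dec r)) * Suc (snd (dec r'))"
definition rt :: "nat \<Rightarrow> nat \<Rightarrow> nat" where
  "rt r r' = enc (Dq r r' - 1, Suc (snd (dec r')) * Suc (snd (dec r)) - 1)"

lemma q_alt: "q r = real (Suc (fst (dec r))) / real (Suc (snd (dec r)))"
  by (simp add: q_def)

lemma q_pos: "0 < q r" by (simp add: q_def)

lemma Dq_pos: "0 < Dq r r' \<longleftrightarrow> q r < q r'"
proof -
  obtain m k where r: "dec r = (m, k)" by (cases "dec r")
  obtain m' k' where r': "dec r' = (m', k')" by (cases "dec r'")
  have "q r < q r' \<longleftrightarrow> real (Suc m) / real (Suc k) < real (Suc m') / real (Suc k')" by (simp add: q_alt r r')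
  also have "\<dots> \<longleftrightarrow> real (Suc m) * real (Suc k') < real (Suc m') * real (Suc k)"
    by (simp add: divide_less_eq less_divide_eq field_simps del: of_nat_Suc)
  also have "\<dots> \<longleftrightarrow> Suc m * Suc k' < Suc m' * Suc k" by (simp only: of_nat_mult[symmetric] of_nat_less_iff)
  finally show ?thesis by (simp add: Dq_def r r')
qed

lemma q_rt: assumes "0 < Dq r r'" shows "q (rt r r') = q r' - q r"
proof -
  obtain m k where r: "dec r = (m, k)" by (cases "dec r")
  obtain m' k' where r': "dec r' = (m', k')" by (cases "dec r'")
  have D: "Suc m * Suc k' < Suc m' * Suc k" using assms by (simp add: Dq_def r r')
  have "q (rt r r') = real (Suc m' * Suc k - Suc m * Suc k') / real (Suc k' * Suc k)"
    using assms by (simp add: q_alt rt_def Dq_def r r' del: mult_Suc mult_Suc_right)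
  also have "\<dots> = (real (Suc m') * real (Suc k) - real (Suc m) * real (Suc k')) / (real (Suc k') * real (Suc k))"
    using D by (simp add: of_nat_diff less_imp_le del: of_nat_Suc mult_Suc mult_Suc_right)
  also have "\<dots> = q r' - q r" by (simp add: q_alt r r' field_simps del: of_nat_Suc)
  finally show ?thesis .
qed

definition "DqX r r' = Sub (Mul (Sc (Fst r')) (Sc (Snd r))) (Mul (Sc (Fst r)) (Sc (Snd r')))"
definition "RtX r r' = Pair (Pr (DqX r r')) (Pr (Mul (Sc (Snd r')) (Sc (Snd r))))"
lemma ev_DqX[simp]: "ev orc (DqX r r') z = Dq (ev orc r z) (ev orc r' z)" by (simp add: DqX_def Dq_def)
lemma ev_RtX[simp]: "ev orc (RtX r r') z = rt (ev orc r z) (ev orc r' z)" by (simp add: RtX_def rt_def)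

definition ccode :: "nat \<Rightarrow> nat \<Rightarrow> nat" where
  "ccode b k = enc (fst (dec k), enc (fst (dec b), rt (snd (dec b)) (snd (dec k))))"

definition "CertQ cl = (let b = Fst (Fst Arg); L' = Snd (Fst Arg); k = Fst (Snd Arg) in
  And (Lt (Cst 0) (DqX (Snd b) (Snd k)))
      (Mem (KX (Cst 0) (Cst cl) (Pair (Fst k) (Pair (Fst b) (RtX (Snd b) (Snd k)))) (Cst 1)) L'))"

lemma ev_CertQ: "ev orc (CertQ cl) (enc (enc (b, L'), enc (k, rest))) =
  bv (0 < Dq (snd (dec b)) (snd (dec k)) \<and> mem (K 0 cl (ccode b k) 1) (ld L'))"
  by (simp add: CertQ_def ccode_def Let_def)

lemma allsuf_elem: "allsuf (\<lambda>h t. P h) xs \<longleftrightarrow> (\<forall>h\<in>set xs. P h)"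
  by (induction xs) auto

definition "FB cl = (let P = Fst (Fst Arg); sg = Fst P; s = Snd P; b = Snd (Fst Arg); t = Snd Arg;
  dl = Fst t; y = Fst (Snd t); L = Fst (Snd (Snd t)); L' = Snd (Snd (Snd t)); tau = App sg dl in
  Not1 (And (HC (Sc tau) s s y L) (And (ValidX (Cst 0) L') (AllSuf (CertQ cl) (Pair b L') tau))))"

definition "MB cl = cmu (cx (FB cl))"

lemma ex_dec4: "(\<exists>t. P (fst (dec t)) (fst (dec (snd (dec t)))) (fst (dec (snd (dec (snd (dec t)))))) (snd (dec (snd (dec (snd (dec t)))))))
   \<longleftrightarrow> (\<exists>a b c d. P a b c d)"
  by (metis fst_conv prod_encode_inverse snd_conv)

lemma W_MB: "b \<in> W (ccomp (MB cl) (cpair (cconst (enc (sc, s))) cid)) \<longleftrightarrow>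
  (\<exists>dl y L L'. valid (Om (Suc (lc (ld sc @ dl)))) L \<and> mem (K 0 s s y) L \<and> valid (Om 0) L' \<and>
     (\<forall>k\<in>set (ld sc @ dl). 0 < Dq (snd (dec b)) (snd (dec k)) \<and> mem (K 0 cl (ccode b k) 1) L'))"
proof -
  have "b \<in> W (ccomp (MB cl) (cpair (cconst (enc (sc, s))) cid)) \<longleftrightarrow> (\<exists>r. comp (\<lambda>_. 0) (MB cl) (enc (enc (sc, s), b)) r)"
    unfolding W_def using smn by blast
  also have "\<dots> \<longleftrightarrow> (\<exists>t. ev (\<lambda>_. 0) (FB cl) (enc (enc (enc (sc, s), b), t)) = 0)"
    unfolding MB_def by (rule cmu_iff[OF total_cx])
  also have "\<dots> \<longleftrightarrow> (\<exists>dl y L L'. valid (Om (Suc (lc (ld sc @ dl)))) L \<and> mem (K 0 s s y) L \<and> valid (Om 0) L' \<and>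
     (\<forall>k\<in>set (ld sc @ dl). 0 < Dq (snd (dec b)) (snd (dec k)) \<and> mem (K 0 cl (ccode b k) 1) L'))" (is "?A \<longleftrightarrow> ?B")
  proof
    assume ?A
    then obtain t where t: "ev (\<lambda>_. 0) (FB cl) (enc (enc (enc (sc, s), b), t)) = 0" by blast
    show ?B
      by (rule exI[of _ "ld (fst (dec t))"], rule exI[of _ "fst (dec (snd (dec t)))"],
          rule exI[of _ "ld (fst (dec (snd (dec (snd (dec t))))))"], rule exI[of _ "ld (snd (dec (snd (dec (snd (dec t))))))"])
        (use t in \<open>simp add: FB_def Let_def ev_CertQ allsuf_elem\<close>)
  next
    assume ?B
    then obtain dl y L L' where h: "valid (Om (Suc (lc (ld sc @ dl)))) L" "mem (K 0 s s y) L" "valid (Om 0) L'"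
     "\<forall>k\<in>set (ld sc @ dl). 0 < Dq (snd (dec b)) (snd (dec k)) \<and> mem (K 0 cl (ccode b k) 1) L'" by blast
    show ?A
      by (rule exI[of _ "enc (lc dl, enc (y, enc (lc L, lc L')))"]) (use h in \<open>simp add: FB_def Let_def ev_CertQ allsuf_elem\<close>)
  qed
  finally show ?thesis .
qed


locale B =
  fixes a :: "nat \<Rightarrow> 'a::metric_space" and x :: 'a and cl :: nat
  assumes dense: "closure (range a) = UNIV"
    and clc: "\<And>n. comp (\<lambda>_. 0) cl n (chi {prod_encode (i, prod_encode (j, r)) | i j r. dist (a i) (a j) < q r} n)"
begin

definition realcert :: "nat \<Rightarrow> nat \<Rightarrow> bool" where
  "realcert b k \<longleftrightarrow> 0 < Dq (snd (dec b)) (snd (dec k)) \<and>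
     dist (a (fst (dec k))) (a (fst (dec b))) < q (rt (snd (dec b)) (snd (dec k)))"

lemma cl_iff: "comp (\<lambda>_. 0) cl (ccode b k) 1 \<longleftrightarrow> dist (a (fst (dec k))) (a (fst (dec b))) < q (rt (snd (dec b)) (snd (dec k)))"
proof -
  let ?LT = "{prod_encode (i, prod_encode (j, r)) | i j r. dist (a i) (a j) < q r}"
  have "comp (\<lambda>_. 0) cl (ccode b k) 1 \<longleftrightarrow> chi ?LT (ccode b k) = 1"
  proof
    assume "comp (\<lambda>_. 0) cl (ccode b k) 1"
    from comp_det[OF clc this] show "chi ?LT (ccode b k) = 1" by simp
  next
    assume "chi ?LT (ccode b k) = 1"
    then show "comp (\<lambda>_. 0) cl (ccode b k) 1" using clc[of "ccode b k"] by simp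
  qed
  also have "\<dots> \<longleftrightarrow> ccode b k \<in> ?LT" by (simp add: chi_def)
  also have "\<dots> \<longleftrightarrow> dist (a (fst (dec k))) (a (fst (dec b))) < q (rt (snd (dec b)) (snd (dec k)))"
  proof
    assume "ccode b k \<in> ?LT"
    then obtain i j r where e: "ccode b k = prod_encode (i, prod_encode (j, r))" "dist (a i) (a j) < q r" by blast
    from e(1) have "i = fst (dec k)" "j = fst (dec b)" "r = rt (snd (dec b)) (snd (dec k))"
      unfolding ccode_def by (metis prod_encode_inverse prod.inject)+
    then show "dist (a (fst (dec k))) (a (fst (dec b))) < q (rt (snd (dec b)) (snd (dec k)))" using e(2) by simp
  next
    assume "dist (a (fst (dec k))) (a (fst (dec b))) < q (rt (snd (dec b)) (snd (dec k)))"
    then show "ccode b k \<in> ?LT" unfolding ccode_def by blast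
  qed
  finally show ?thesis .
qed

lemma certs: "(\<exists>L'. valid (Om 0) L' \<and> (\<forall>k\<in>set tau. 0 < Dq (snd (dec b)) (snd (dec k)) \<and> mem (K 0 cl (ccode b k) 1) L'))
   \<longleftrightarrow> (\<forall>k\<in>set tau. realcert b k)"
proof
  assume "\<exists>L'. valid (Om 0) L' \<and> (\<forall>k\<in>set tau. 0 < Dq (snd (dec b)) (snd (dec k)) \<and> mem (K 0 cl (ccode b k) 1) L')"
  then obtain L' where L': "valid (Om 0) L'" "\<forall>k\<in>set tau. 0 < Dq (snd (dec b)) (snd (dec k)) \<and> mem (K 0 cl (ccode b k) 1) L'" by blast
  have "comp (\<lambda>_. 0) cl (ccode b k) 1" if "k \<in> set tau" for k
    using valid_comp[OF L'(1)] L'(2) that by (simp add: Om0)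
  then show "\<forall>k\<in>set tau. realcert b k" using L'(2) cl_iff unfolding realcert_def by blast
next
  assume h: "\<forall>k\<in>set tau. realcert b k"
  then show "\<exists>L'. valid (Om 0) L' \<and> (\<forall>k\<in>set tau. 0 < Dq (snd (dec b)) (snd (dec k)) \<and> mem (K 0 cl (ccode b k) 1) L')"
  proof (induction tau)
    case Nil then show ?case by (intro exI[of _ "[]"]) simp
  next
    case (Cons k tau)
    then obtain L1 where L1: "valid (Om 0) L1" "\<forall>k\<in>set tau. 0 < Dq (snd (dec b)) (snd (dec k)) \<and> mem (K 0 cl (ccode b k) 1) L1" by auto
    have "comp (\<lambda>_. 0) cl (ccode b k) 1" using Cons.prems cl_iff unfolding realcert_def by auto
    then obtain L2 where L2': "valid (\<lambda>a b. b = (\<lambda>_. 0) a) L2" "mem (K 0 cl (ccode b k) 1) L2"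
      using comp_deriv by blast
    then have L2: "valid (Om 0) L2" "mem (K 0 cl (ccode b k) 1) L2" by (simp_all add: Om0)
    show ?case using L1 L2 Cons.prems unfolding realcert_def
      by (intro exI[of _ "L1 @ L2"]) (auto intro: valid_app mem_app)
  qed
qed

definition "qc sc s = ccomp (MB cl) (cpair (cconst (enc (sc, s))) cid)"

lemma W_q: "b \<in> W (qc sc s) \<longleftrightarrow>
   (\<exists>dl y L. valid (Om (Suc (lc (ld sc @ dl)))) L \<and> mem (K 0 s s y) L \<and> (\<forall>k\<in>set (ld sc @ dl). realcert b k))"
  unfolding qc_def W_MB using certs by blast

lemma approx: "\<exists>j. dist (a j) x < e" if "0 < e"
  using dense closure_approachable[of x "range a"] that by auto

lemma geo: "(\<exists>b. x \<in> ball_code a b \<and> (\<forall>k\<in>set tau. realcert b k)) \<longleftrightarrow> set tau \<subseteq> Nbase a x"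
proof
  assume "\<exists>b. x \<in> ball_code a b \<and> (\<forall>k\<in>set tau. realcert b k)"
  then obtain b where b: "x \<in> ball_code a b" "\<forall>k\<in>set tau. realcert b k" by blast
  show "set tau \<subseteq> Nbase a x"
  proof
    fix k assume k: "k \<in> set tau"
    let ?i = "fst (dec k)" and ?r' = "snd (dec k)" and ?j = "fst (dec b)" and ?r = "snd (dec b)"
    have "dist (a ?j) x < q ?r" using b(1) by (simp add: ball_code_def dist_commute)
    moreover have "dist (a ?i) (a ?j) < q ?r' - q ?r" using b(2) k q_rt unfolding realcert_def by auto
    moreover have "dist (a ?i) x \<le> dist (a ?i) (a ?j) + dist (a ?j) x" by (rule dist_triangle)
    ultimately have "dist (a ?i) x < q ?r'" by linarith
    then show "k \<in> Nbase a x" by (simp add: Nbase_def ball_code_def)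
  qed
next
  assume sub: "set tau \<subseteq> Nbase a x"
  define sl where "sl k = q (snd (dec k)) - dist (a (fst (dec k))) x" for k
  have slpos: "0 < sl k" if "k \<in> set tau" for k
    using sub that by (auto simp: sl_def Nbase_def ball_code_def)
  define eps where "eps = (if tau = [] then 1 else Min (sl ` set tau))"
  have eps: "0 < eps" using slpos by (auto simp: eps_def)
  have eps_le: "eps \<le> sl k" if "k \<in> set tau" for k using that by (auto simp: eps_def)
  obtain n where n: "inverse (real (Suc n)) < eps / 3" using reals_Archimedean[of "eps / 3"] eps by auto
  define r where "r = enc (0, n)"
  have qr: "q r = inverse (real (Suc n))" by (simp add: r_def q_def divide_inverse)
  obtain j where j: "dist (a j) x < q r" using approx q_pos by blast
  define b where "b = enc (j, r)"
  have "x \<in> ball_code a b" using j by (simp add: b_def ball_code_def dist_commute)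
  moreover have "realcert b k" if k: "k \<in> set tau" for k
  proof -
    let ?i = "fst (dec k)" and ?r' = "snd (dec k)"
    have s: "eps \<le> q ?r' - dist (a ?i) x" using eps_le[OF k] by (simp add: sl_def)
    have "q r < eps / 3" using qr n by simp
    then have D: "q r < q ?r'" using s eps zero_le_dist[of "a ?i" x] by linarith
    then have D': "0 < Dq r ?r'" using Dq_pos by blast
    have "dist (a ?i) (a j) \<le> dist (a ?i) x + dist x (a j)" by (rule dist_triangle)
    also have "\<dots> < q ?r' - q r" using s j \<open>q r < eps / 3\<close> q_pos[of r] by (simp add: dist_commute)
    finally show ?thesis unfolding realcert_def b_def using D' q_rt[OF D'] by simp
  qed
  ultimately show "\<exists>b. x \<in> ball_code a b \<and> (\<forall>k\<in>set tau. realcert b k)" by blast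
qed

lemma pj_q: "qc sc s \<in> pjump a x \<longleftrightarrow>
   (\<exists>dl y L. valid (Om (Suc (lc (ld sc @ dl)))) L \<and> mem (K 0 s s y) L \<and> set (ld sc @ dl) \<subseteq> Nbase a x)"
proof -
  have "qc sc s \<in> pjump a x \<longleftrightarrow> (\<exists>b dl y L. x \<in> ball_code a b \<and> valid (Om (Suc (lc (ld sc @ dl)))) L \<and> mem (K 0 s s y) L \<and> (\<forall>k\<in>set (ld sc @ dl). realcert b k))"
    unfolding pjump_def mem_Collect_eq UN_iff Bex_def W_q by blast
  also have "\<dots> \<longleftrightarrow> (\<exists>dl y L. valid (Om (Suc (lc (ld sc @ dl)))) L \<and> mem (K 0 s s y) L \<and> set (ld sc @ dl) \<subseteq> Nbase a x)" using geo by blast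
  finally show ?thesis .
qed

end


definition "MW = cmu (cx (Not1 (Eq (Fst (Fst Arg)) (Snd (Fst Arg)))))"
definition "WKX e = SMN MW e"
lemma ev_WKX[simp]: "ev orc (WKX e) z = ccomp MW (cpair (cconst (ev orc e z)) cid)"
  by (simp add: WKX_def)

lemma W_MW: "W (ccomp MW (cpair (cconst k) cid)) = {k}"
proof -
  have "b \<in> W (ccomp MW (cpair (cconst k) cid)) \<longleftrightarrow> (\<exists>r. comp (\<lambda>_. 0) MW (enc (k, b)) r)" for b
    unfolding W_def using smn by blast
  also have "\<dots> b \<longleftrightarrow> (\<exists>t. ev (\<lambda>_. 0) (Not1 (Eq (Fst (Fst Arg)) (Snd (Fst Arg)))) (enc (enc (k, b), t)) = 0)" for b
    unfolding MW_def by (rule cmu_iff[OF total_cx])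
  finally show ?thesis by auto
qed

definition "QX cl sg s = SMN (MB cl) (Pair sg s)"
lemma ev_QX[simp]: "ev orc (QX cl sg s) z = ccomp (MB cl) (cpair (cconst (enc (ev orc sg z, ev orc s z))) cid)"
  by (simp add: QX_def)

definition "SEARCH cl = (let s = Fst (Snd (Fst Arg)); sg = Snd (Snd (Fst Arg)); t = Snd Arg;
  dl = Fst t; y = Fst (Snd t); L = Snd (Snd t); tau = App sg dl in
  Ifz (Orc (QX cl sg s)) (Cst 0)
    (Not1 (And (HC (Sc tau) s s y L) (AllSuf (Eq (Orc (WKX (Fst (Snd Arg)))) (Cst 1)) (Cst 0) tau))))"

definition "POST cl k0 = (let s = Fst (Snd (Fst Arg)); sg = Snd (Snd (Fst Arg)); m = Snd Arg;
  sg1 = Ifz (Orc (QX cl sg s)) sg (App sg (Fst m)) in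
  App sg1 (CCons (Ifz (Orc (WKX s)) (Cst k0) s) (Cst 0)))"

definition "GP cl k0 = ccomp (cx (POST cl k0)) (cpair cid (cmu (cx (SEARCH cl))))"
definition "STAGE cl k0 = crec czero (GP cl k0)"
definition "FINAL cl k0 = ccomp (cx (Orc (QX cl (Fst Arg) (Snd Arg)))) (cpair (ccomp (STAGE cl k0) (cpair czero cid)) cid)"

context B
begin

abbreviation "X \<equiv> chi (pjump a x)"

lemma wk_iff: "ccomp MW (cpair (cconst k) cid) \<in> pjump a x \<longleftrightarrow> k \<in> Nbase a x"
  unfolding pjump_def by (simp add: W_MW Nbase_def)

definition "Gf k0 v = ev X (POST cl k0) (enc (v, LEAST t. ev X (SEARCH cl) (enc (v, t)) = 0))"

lemma search_ex: "\<exists>t. ev X (SEARCH cl) (enc (v, t)) = 0"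
proof -
  obtain u s sc where v: "v = enc (u, enc (s, sc))" by (metis prod_decode_inverse prod.collapse)
  show ?thesis
  proof (cases "qc sc s \<in> pjump a x")
    case False
    then show ?thesis unfolding v SEARCH_def Let_def by (simp add: chi_def qc_def)
  next
    case True
    then obtain dl y L where h: "valid (Om (Suc (lc (ld sc @ dl)))) L" "mem (K 0 s s y) L" "set (ld sc @ dl) \<subseteq> Nbase a x"
      unfolding pj_q by blast
    have "\<forall>k\<in>set (ld sc @ dl). chi (pjump a x) (ccomp MW (cpair (cconst k) cid)) = 1"
      using h(3) wk_iff by (auto simp: chi_def)
    then show ?thesis unfolding v SEARCH_def Let_def using True h
      by (intro exI[of _ "enc (lc dl, enc (y, lc L))"]) (simp add: chi_def qc_def allsuf_elem)
  qed
qed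

lemma total_GP: "total X (GP cl k0) (Gf k0)"
  unfolding GP_def Gf_def
  by (rule total_ext, (rule totr total_cx total_cid | rule total_cmu[OF total_cx search_ex])+) simp

definition "stage k0 n = prec (\<lambda>_. 0) (Gf k0) 0 n"

lemma total_STAGE: "total X (STAGE cl k0) (\<lambda>w. prec (\<lambda>_. 0) (Gf k0) (fst (dec w)) (snd (dec w)))"
  unfolding STAGE_def by (rule totr total_GP)+

lemma total_FINAL: "total X (FINAL cl k0) (\<lambda>e. X (qc (stage k0 e) e))"
  unfolding FINAL_def
  by (rule total_ext, (rule totr total_cx total_cid total_STAGE)+) (simp add: stage_def qc_def)

definition "nxt k0 s = (if s \<in> Nbase a x then s else k0)"

lemma X_wk: "X (ccomp MW (cpair (cconst s) cid)) = (if s \<in> Nbase a x then 1 else 0)"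
  using wk_iff by (simp add: chi_def)

lemma POST_eval: "ev X (POST cl k0) (enc (enc (u, enc (s, sc)), m)) =
   lc ((if qc sc s \<in> pjump a x then ld sc @ ld (fst (dec m)) else ld sc) @ [nxt k0 s])"
proof -
  have h1: "X (ccomp (MB cl) (cpair (cconst (enc (sc, s))) cid)) = (if qc sc s \<in> pjump a x then 1 else 0)"
    by (simp add: qc_def chi_def)
  show ?thesis unfolding POST_def Let_def
    by (simp only: ev.simps ev_App ev_CCons ev_QX ev_WKX prod_encode_inverse fst_conv snd_conv h1 X_wk)
      (simp add: nxt_def)
qed

lemma Gf_eval: "Gf k0 (enc (u, enc (s, sc))) = lc ((if qc sc s \<in> pjump a x then ld sc @ ld (fst (dec (LEAST t. ev X (SEARCH cl) (enc (enc (u, enc (s, sc)), t)) = 0))) else ld sc) @ [nxt k0 s])"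
  unfolding Gf_def by (rule POST_eval)

lemma Gf_no: "qc sc s \<notin> pjump a x \<Longrightarrow> Gf k0 (enc (u, enc (s, sc))) = lc (ld sc @ [nxt k0 s])"
  unfolding Gf_eval by (simp only: if_False)

lemma Gf_yes:
  assumes "qc sc s \<in> pjump a x"
  shows "\<exists>dl y L. Gf k0 (enc (u, enc (s, sc))) = lc ((ld sc @ dl) @ [nxt k0 s]) \<and>
     valid (Om (Suc (lc (ld sc @ dl)))) L \<and> mem (K 0 s s y) L \<and> set dl \<subseteq> Nbase a x"
proof -
  let ?v = "enc (u, enc (s, sc))"
  define t0 where "t0 = (LEAST t. ev X (SEARCH cl) (enc (?v, t)) = 0)"
  have "ev X (SEARCH cl) (enc (?v, t0)) = 0" unfolding t0_def using search_ex by (rule LeastI_ex)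
  then have h: "valid (Om (Suc (lc (ld sc @ ld (fst (dec t0)))))) (ld (snd (dec (snd (dec t0)))))"
     "mem (K 0 s s (fst (dec (snd (dec t0))))) (ld (snd (dec (snd (dec t0)))))"
     "\<forall>k\<in>set (ld sc @ ld (fst (dec t0))). chi (pjump a x) (ccomp MW (cpair (cconst k) cid)) = 1"
    using assms unfolding SEARCH_def Let_def by (simp_all add: chi_def qc_def allsuf_elem)
  have "set (ld (fst (dec t0))) \<subseteq> Nbase a x" using h(3) wk_iff by (auto simp: chi_def split: if_splits)
  moreover have "Gf k0 ?v = lc ((ld sc @ ld (fst (dec t0))) @ [nxt k0 s])"
    using assms unfolding Gf_eval t0_def by (simp only: if_True)
  ultimately show ?thesis using h(1,2) by blast
qed

end


context B
begin

context
  fixes k0 assumes k0: "k0 \<in> Nbase a x"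
begin

definition "sg n = ld (stage k0 n)"

lemma stage_Suc: "stage k0 (Suc n) = Gf k0 (enc (0, enc (n, stage k0 n)))"
  by (simp add: stage_def)

lemma nxt_in: "nxt k0 n \<in> Nbase a x" using k0 by (simp add: nxt_def)

lemma sg_step: "\<exists>dl. sg (Suc n) = (sg n @ dl) @ [nxt k0 n] \<and> set dl \<subseteq> Nbase a x \<and>
   (qc (stage k0 n) n \<in> pjump a x \<longrightarrow> (\<exists>y L. valid (Om (Suc (lc (sg n @ dl)))) L \<and> mem (K 0 n n y) L))"
proof (cases "qc (stage k0 n) n \<in> pjump a x")
  case False
  then show ?thesis unfolding sg_def stage_Suc using Gf_no[OF False] by (intro exI[of _ "[]"]) simp
next
  case True
  obtain dl y L where
    "Gf k0 (enc (0, enc (n, stage k0 n))) = lc ((ld (stage k0 n) @ dl) @ [nxt k0 n])"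
    "valid (Om (Suc (lc (ld (stage k0 n) @ dl)))) L" "mem (K 0 n n y) L" "set dl \<subseteq> Nbase a x" using Gf_yes[OF True] by blast
  then show ?thesis unfolding sg_def stage_Suc by (intro exI[of _ dl]) auto
qed

lemma sg_sub: "set (sg n) \<subseteq> Nbase a x"
proof (induction n)
  case 0 then show ?case by (simp add: sg_def stage_def)
next
  case (Suc n) then show ?case using sg_step[of n] nxt_in by auto
qed

lemma sg_len: "n \<le> length (sg n)"
proof (induction n)
  case (Suc n) then show ?case using sg_step[of n] by auto
qed simp

lemma sg_prefix: "m \<le> n \<Longrightarrow> \<exists>ys. sg n = sg m @ ys"
proof (induction n rule: dec_induct)
  case (step n) then show ?case using sg_step[of n] by fastforce
qed simp

definition "pp i = sg (Suc i) ! i"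

lemma pp_eq: "i < length (sg n) \<Longrightarrow> pp i = sg n ! i"
proof (cases "n \<le> Suc i")
  case True
  assume i: "i < length (sg n)"
  obtain ys where "sg (Suc i) = sg n @ ys" using sg_prefix[OF True] by blast
  then show ?thesis using i by (simp add: pp_def nth_append)
next
  case False
  then have "Suc i \<le> n" by simp
  then obtain ys where "sg n = sg (Suc i) @ ys" using sg_prefix by blast
  moreover have "i < length (sg (Suc i))" using sg_len[of "Suc i"] by simp
  ultimately show ?thesis by (simp add: pp_def nth_append)
qed

lemma range_pp: "range pp = Nbase a x"
proof
  show "range pp \<subseteq> Nbase a x"
  proof
    fix k assume "k \<in> range pp"
    then obtain i where "k = pp i" by blast
    moreover have "i < length (sg (Suc i))" using sg_len[of "Suc i"] by simp
    ultimately show "k \<in> Nbase a x" using sg_sub[of "Suc i"] nth_mem by (fastforce simp: pp_def)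
  qed
next
  show "Nbase a x \<subseteq> range pp"
  proof
    fix k assume k: "k \<in> Nbase a x"
    obtain dl where "sg (Suc k) = (sg k @ dl) @ [nxt k0 k]" using sg_step[of k] by blast
    then have e: "sg (Suc k) = (sg k @ dl) @ [k]" using k by (simp add: nxt_def)
    have "pp (length (sg k @ dl)) = sg (Suc k) ! length (sg k @ dl)" by (rule pp_eq) (simp add: e)
    also have "\<dots> = k" by (simp add: e)
    finally show "k \<in> range pp" by (metis rangeI)
  qed
qed

lemma member_le_sum_list': "(E::nat) \<in> set L \<Longrightarrow> E \<le> sum_list L"
  by (induction L) auto

lemma fjump_pp: "e \<in> fjump pp \<longleftrightarrow> qc (stage k0 e) e \<in> pjump a x"
proof
  assume "qc (stage k0 e) e \<in> pjump a x"
  then obtain dl y L where h: "sg (Suc e) = (sg e @ dl) @ [nxt k0 e]"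
    "valid (Om (Suc (lc (sg e @ dl)))) L" "mem (K 0 e e y) L" using sg_step[of e] by blast
  have "\<forall>a' b. Om (Suc (lc (sg e @ dl))) a' b \<longrightarrow> b = pp a'"
  proof (intro allI impI)
    fix a' b assume "Om (Suc (lc (sg e @ dl))) a' b"
    then have "a' < length (sg e @ dl)" "b = (sg e @ dl) ! a'" by (simp_all add: OmS)
    then show "b = pp a'" using pp_eq[of a' "Suc e"] h(1) by (auto simp: nth_append)
  qed
  then have "comp pp e e y" using valid_comp h(2,3) by blast
  then show "e \<in> fjump pp" by (auto simp: fjump_def)
next
  assume "e \<in> fjump pp"
  then obtain y where "comp pp e e y" by (auto simp: fjump_def)
  then obtain L where L: "valid (\<lambda>a b. b = pp a) L" "mem (K 0 e e y) L" using comp_deriv by blast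
  define N where "N = max (Suc (sum_list L)) (length (sg e))"
  have "\<forall>E\<in>set L. E < N" using member_le_sum_list' by (fastforce simp: N_def)
  then have L2: "valid (\<lambda>a b. a < N \<and> b = pp a) L" using valid_restrict L(1) by blast
  define tau where "tau = map pp [0..<N]"
  have pre: "take (length (sg e)) tau = sg e"
    by (rule nth_equalityI) (auto simp: tau_def N_def pp_eq)
  define dl where "dl = drop (length (sg e)) tau"
  have tau: "sg e @ dl = tau" unfolding dl_def using pre by (metis append_take_drop_id)
  have "Om (Suc (lc (sg e @ dl))) = (\<lambda>a b. a < N \<and> b = pp a)"
    unfolding tau OmS by (auto simp: tau_def fun_eq_iff)
  moreover have "set (sg e @ dl) \<subseteq> Nbase a x" unfolding tau tau_def using range_pp by auto
  ultimately show "qc (stage k0 e) e \<in> pjump a x"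
    unfolding pj_q using L2 L(2) by (metis sg_def)
qed

lemma partB: "turing_le (fjump pp) (pjump a x)"
proof -
  have "comp X (FINAL cl k0) e (chi (fjump pp) e)" for e
    using total_FINAL[of k0] unfolding total_def by (simp add: chi_def fjump_pp)
  then show ?thesis unfolding turing_le_def by blast
qed

lemma result: "is_name a pp x \<and> turing_equiv (pjump a x) (fjump pp)"
  using partA[OF range_pp] partB range_pp by (simp add: is_name_def turing_equiv_def)

end

end


theorem lemma2p10:
  fixes a :: "nat \<Rightarrow> 'a::{metric_space, complete_space}"
  assumes "rec_presented a"
  shows "\<forall>x. \<exists>p. is_name a p x \<and> turing_equiv (pjump a x) (fjump p)"
proof
  fix x
  from assms have dense: "closure (range a) = UNIV"
    and "recursive_set {prod_encode (i, prod_encode (j, r)) | i j r. dist (a i) (a j) < q r}"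
    unfolding rec_presented_def by blast+
  then obtain cl where cl: "\<And>n. comp (\<lambda>_. 0) cl n (chi {prod_encode (i, prod_encode (j, r)) | i j r. dist (a i) (a j) < q r} n)"
    unfolding recursive_set_def by blast
  interpret B a x cl using dense cl by unfold_locales
  obtain j where j: "dist (a j) x < q (enc (0, 0))" using approx q_pos by blast
  have k0: "enc (j, enc (0, 0)) \<in> Nbase a x" using j by (simp add: Nbase_def ball_code_def)
  show "\<exists>p. is_name a p x \<and> turing_equiv (pjump a x) (fjump p)"
    using result[OF k0] by blast
qed


end
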